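(* Consider an irreducible Markov chain on $n$ states whose transition probabilities are rational numbers whose denominators all divide a positive integer $M$. Let $k\le n$ be the number of states having at least two possible successors (i.e. at least two states reachable in one step with positive probability). Let $\pi\in(0,1]^n$ be the invariant probability measure of the chain. Then the least common denominator of the rational numbers $\pi_1,\dots,\pi_n$ is at most $n M^{\min\{k,n-1\}}$. *)

theory Defs
  imports Complex_Main
begin

definition stochastic_matrix :: "nat \<Rightarrow> (nat \<Rightarrow> nat \<Rightarrow> real) \<Rightarrow> bool" where
  "stochastic_matrix n P \<longleftrightarrow>
     (\<forall>i<n. \<forall>j<n. P i j \<ge> 0) \<and> (\<forall>i<n. (\<Sum>j<n. P i j) = 1)"

definition trans_graph :: "nat \<Rightarrow> (nat \<Rightarrow> nat \<Rightarrow> real) \<Rightarrow> (nat \<times> nat) set" where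
  "trans_graph n P = {(i, j). i < n \<and> j < n \<and> P i j > 0}"

definition irreducible_chain :: "nat \<Rightarrow> (nat \<Rightarrow> nat \<Rightarrow> real) \<Rightarrow> bool" where
  "irreducible_chain n P \<longleftrightarrow> (\<forall>i<n. \<forall>j<n. (i, j) \<in> (trans_graph n P)\<^sup>+)"

definition invariant_distribution :: "nat \<Rightarrow> (nat \<Rightarrow> nat \<Rightarrow> real) \<Rightarrow> (nat \<Rightarrow> real) \<Rightarrow> bool" where
  "invariant_distribution n P \<pi> \<longleftrightarrow>
     (\<forall>i<n. \<pi> i \<ge> 0) \<and> (\<Sum>i<n. \<pi> i) = 1 \<and>
     (\<forall>j<n. (\<Sum>i<n. \<pi> i * P i j) = \<pi> j)"

definition branching_states :: "nat \<Rightarrow> (nat \<Rightarrow> nat \<Rightarrow> real) \<Rightarrow> nat" where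
  "branching_states n P = card {i. i < n \<and> card {j. j < n \<and> P i j > 0} \<ge> 2}"

text \<open>Least common denominator of the numbers x 0, ..., x (n-1) (meaningful when all are rational).\<close>
definition lcd :: "nat \<Rightarrow> (nat \<Rightarrow> real) \<Rightarrow> nat" where
  "lcd n x = (LEAST d::nat. d > 0 \<and> (\<forall>i<n. real d * x i \<in> \<int>))"

end

theory Submission imports Defs "HOL-Library.FuncSet" begin

definition Fn :: "nat \<Rightarrow> (nat \<Rightarrow> nat) set" where "Fn n = {..<n} \<rightarrow>\<^sub>E {..<n}"
definition Arb :: "nat \<Rightarrow> nat \<Rightarrow> (nat \<Rightarrow> nat) set" where
  "Arb n r = {T \<in> Fn n. T r = r \<and> (\<forall>v<n. \<exists>m. (T^^m) v = r)}"
definition Gj :: "nat \<Rightarrow> nat \<Rightarrow> (nat \<Rightarrow> nat) set" where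
  "Gj n j = {g \<in> Fn n. \<forall>v<n. \<exists>m. (g^^m) v = j}"
definition wt :: "nat \<Rightarrow> (nat \<Rightarrow> nat \<Rightarrow> real) \<Rightarrow> nat \<Rightarrow> (nat \<Rightarrow> nat) \<Rightarrow> real" where
  "wt n P r T = (\<Prod>v\<in>{..<n}-{r}. P v (T v))"
definition tw :: "nat \<Rightarrow> (nat \<Rightarrow> nat \<Rightarrow> real) \<Rightarrow> nat \<Rightarrow> real" where
  "tw n P r = (\<Sum>T\<in>Arb n r. wt n P r T)"

lemma finite_Fn: "finite (Fn n)" unfolding Fn_def by (simp add: finite_PiE)
lemma finite_Arb: "finite (Arb n r)" unfolding Arb_def using finite_Fn by simp
lemma finite_Gj: "finite (Gj n r)" unfolding Gj_def using finite_Fn by simp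

lemma Fn_upd: "T \<in> Fn n \<Longrightarrow> i < n \<Longrightarrow> j < n \<Longrightarrow> T(i:=j) \<in> Fn n"
  unfolding Fn_def by (auto simp: PiE_iff extensional_def)

lemma Fn_lt: "T \<in> Fn n \<Longrightarrow> v < n \<Longrightarrow> T v < n"
  unfolding Fn_def by (auto simp: PiE_iff)

lemma reach_agree:
  assumes "\<forall>v. v \<noteq> r \<longrightarrow> f v = g v" "(f^^m) v = r"
  shows "\<exists>m'. (g^^m') v = r"
  using assms(2)
proof (induction m arbitrary: v)
  case 0 then show ?case by (intro exI[of _ 0]) simp
next
  case (Suc m)
  show ?case
  proof (cases "v = r")
    case True then show ?thesis by (intro exI[of _ 0]) simp
  next
    case False
    have "(f^^m) (f v) = r" using Suc.prems by (simp add: funpow_Suc_right del: funpow.simps)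
    then obtain m' where "(g^^m') (f v) = r" using Suc.IH by blast
    then have "(g^^Suc m') v = r" using False assms(1)
      by (simp add: funpow_Suc_right del: funpow.simps)
    then show ?thesis by blast
  qed
qed

lemma rhs_eq:
  assumes "j < n"
  shows "tw n P j * (\<Sum>k<n. P j k) = (\<Sum>g\<in>Gj n j. \<Prod>v<n. P v (g v))"
proof -
  have "tw n P j * (\<Sum>k<n. P j k) = (\<Sum>T\<in>Arb n j. \<Sum>k<n. wt n P j T * P j k)"
    unfolding tw_def sum_distrib_right by (simp add: sum_distrib_left)
  also have "\<dots> = (\<Sum>x\<in>Arb n j \<times> {..<n}. wt n P j (fst x) * P j (snd x))"
    unfolding sum.cartesian_product by (rule sum.cong) auto
  also have "\<dots> = (\<Sum>g\<in>Gj n j. \<Prod>v<n. P v (g v))"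
  proof (rule sym, rule sum.reindex_bij_witness[where i="\<lambda>(T,k). T(j:=k)" and j="\<lambda>g. (g(j:=j), g j)"])
    fix g assume g: "g \<in> Gj n j"
    show "(case (g(j := j), g j) of (T, k) \<Rightarrow> T(j := k)) = g" by simp
    have gF: "g \<in> Fn n" and gr: "\<forall>v<n. \<exists>m. (g^^m) v = j" using g by (auto simp: Gj_def)
    have "g(j:=j) \<in> Arb n j"
      unfolding Arb_def using Fn_upd[OF gF assms assms] gr reach_agree[of j g "g(j:=j)"] by auto
    then show "(g(j := j), g j) \<in> Arb n j \<times> {..<n}" using Fn_lt[OF gF assms] by simp
    have "(\<Prod>v<n. P v (g v)) = P j (g j) * (\<Prod>v\<in>{..<n}-{j}. P v (g v))"
      using assms by (simp add: prod.remove)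
    also have "(\<Prod>v\<in>{..<n}-{j}. P v (g v)) = wt n P j (g(j:=j))"
      unfolding wt_def by (rule prod.cong) auto
    finally show "wt n P j (fst (g(j := j), g j)) * P j (snd (g(j := j), g j)) = (\<Prod>v<n. P v (g v))"
      by simp
  next
    fix x assume x: "x \<in> Arb n j \<times> {..<n}"
    obtain T k where xe: "x = (T,k)" by fastforce
    have T: "T \<in> Fn n" "T j = j" "\<forall>v<n. \<exists>m. (T^^m) v = j" "k < n" using x xe by (auto simp: Arb_def)
    show "((case x of (T, k) \<Rightarrow> T(j := k))(j:=j), (case x of (T, k) \<Rightarrow> T(j := k)) j) = x"
      using xe T by (auto intro!: ext)
    show "(case x of (T, k) \<Rightarrow> T(j := k)) \<in> Gj n j"
      unfolding Gj_def xe using Fn_upd[OF T(1) assms T(4)] T(3) reach_agree[of j T "T(j:=k)"] by auto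
  qed
  finally show ?thesis .
qed

lemma first_hit:
  assumes T: "T \<in> Arb n i" and a: "a \<noteq> i" "T a = j" and j: "j < n"
  shows "\<exists>m. ((T(i:=j))^^m) j = i \<and> (\<forall>l<m. ((T(i:=j))^^l) j \<noteq> a)"
proof -
  define g where "g = T(i:=j)"
  have "\<exists>m. (T^^m) j = i" using T j by (auto simp: Arb_def)
  define m where "m = (LEAST m. (T^^m) j = i)"
  have mi: "(T^^m) j = i" unfolding m_def using \<open>\<exists>m. (T^^m) j = i\<close> by (rule LeastI_ex)
  have lt: "\<And>l. l < m \<Longrightarrow> (T^^l) j \<noteq> i" unfolding m_def using not_less_Least by blast
  have na: "(T^^l) j \<noteq> a" if "l < m" for l
  proof
    assume "(T^^l) j = a"
    then have p: "(T^^Suc l) j = j" using a by simp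
    have "(T^^(m mod Suc l)) j = i" using funpow_mod_eq[OF p, of m] mi by simp
    moreover have "m mod Suc l < m" using that mod_less_divisor[of "Suc l" m] by linarith
    ultimately show False using lt by blast
  qed
  have eq: "l \<le> m \<Longrightarrow> (g^^l) j = (T^^l) j" for l
  proof (induction l)
    case 0 then show ?case by simp
  next
    case (Suc l)
    then have "(T^^l) j \<noteq> i" using lt by simp
    then show ?case using Suc by (simp add: g_def)
  qed
  show ?thesis unfolding g_def[symmetric]
    by (intro exI[of _ m]) (use eq mi na in auto)
qed

lemma inj_aux:
  assumes T1: "T1 \<in> Arb n i1" and T2: "T2 \<in> Arb n i2" and j: "j < n"
    and eq: "T1(i1:=j) = T2(i2:=j)"
  shows "i1 = i2"
proof (rule ccontr)
  assume ne: "i1 \<noteq> i2"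
  define g where "g = T1(i1:=j)"
  have "T1 i2 = j" using fun_cong[OF eq, of i2] ne by simp
  from first_hit[OF T1 ne[symmetric] this j] obtain m1 where
    m1: "(g^^m1) j = i1" "\<forall>l<m1. (g^^l) j \<noteq> i2" unfolding g_def by blast
  have "T2 i1 = j" using fun_cong[OF eq, of i1] ne by simp
  from first_hit[OF T2 ne this j] obtain m2 where
    m2: "(g^^m2) j = i2" "\<forall>l<m2. (g^^l) j \<noteq> i1" unfolding g_def eq by blast
  show False
    using m1 m2 ne by (cases m1 m2 rule: linorder_cases) auto
qed

lemma lhs_eq:
  assumes "j < n"
  shows "(\<Sum>i<n. tw n P i * P i j) = (\<Sum>g\<in>Gj n j. \<Prod>v<n. P v (g v))"
proof -
  define \<phi> where "\<phi> = (\<lambda>(i::nat, T::nat\<Rightarrow>nat). T(i:=j))"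
  have "(\<Sum>i<n. tw n P i * P i j) = (\<Sum>i<n. \<Sum>T\<in>Arb n i. wt n P i T * P i j)"
    unfolding tw_def by (simp add: sum_distrib_right)
  also have "\<dots> = (\<Sum>x\<in>Sigma {..<n} (Arb n). wt n P (fst x) (snd x) * P (fst x) j)"
    by (subst sum.Sigma) (auto simp: finite_Arb case_prod_beta)
  also have "\<dots> = (\<Sum>x\<in>Sigma {..<n} (Arb n). (\<Prod>v<n. P v (\<phi> x v)))"
  proof (rule sum.cong[OF refl])
    fix x assume x: "x \<in> Sigma {..<n} (Arb n)"
    obtain i T where xe: "x = (i,T)" by fastforce
    have "(\<Prod>v<n. P v (\<phi> x v)) = P i (\<phi> x i) * (\<Prod>v\<in>{..<n}-{i}. P v (\<phi> x v))"
      using x xe by (intro prod.remove) auto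
    also have "\<phi> x i = j" using xe by (simp add: \<phi>_def)
    also have "(\<Prod>v\<in>{..<n}-{i}. P v (\<phi> x v)) = wt n P i T"
      unfolding wt_def xe \<phi>_def by (rule prod.cong) auto
    finally show "wt n P (fst x) (snd x) * P (fst x) j = (\<Prod>v<n. P v (\<phi> x v))"
      using xe by simp
  qed
  also have "\<dots> = (\<Sum>g\<in>\<phi> ` Sigma {..<n} (Arb n). \<Prod>v<n. P v (g v))"
  proof (rule sum.reindex[symmetric, unfolded comp_def])
    show "inj_on \<phi> (Sigma {..<n} (Arb n))"
    proof (rule inj_onI)
      fix x y assume x: "x \<in> Sigma {..<n} (Arb n)" and y: "y \<in> Sigma {..<n} (Arb n)" and e: "\<phi> x = \<phi> y"
      obtain i1 T1 where xe: "x = (i1,T1)" by fastforce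
      obtain i2 T2 where ye: "y = (i2,T2)" by fastforce
      have A: "T1 \<in> Arb n i1" "T2 \<in> Arb n i2" using x y xe ye by auto
      have e': "T1(i1:=j) = T2(i2:=j)" using e xe ye by (simp add: \<phi>_def)
      have ii: "i1 = i2" by (rule inj_aux[OF A assms e'])
      have "T1 i1 = i1" "T2 i2 = i2" using A by (auto simp: Arb_def)
      then have "T1 = T2" using fun_cong[OF e'] ii by (intro ext) (metis fun_upd_other)
      then show "x = y" using xe ye ii by simp
    qed
  qed
  also have "\<phi> ` Sigma {..<n} (Arb n) = Gj n j"
  proof
    show "\<phi> ` Sigma {..<n} (Arb n) \<subseteq> Gj n j"
    proof
      fix g assume "g \<in> \<phi> ` Sigma {..<n} (Arb n)"
      then obtain i T where iT: "i < n" "T \<in> Arb n i" "g = T(i:=j)" by (auto simp: \<phi>_def)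
      have T: "T \<in> Fn n" "\<forall>v<n. \<exists>m. (T^^m) v = i" using iT by (auto simp: Arb_def)
      have "\<exists>m. (g^^m) v = j" if vn: "v < n" for v
      proof -
        obtain m where "(T^^m) v = i" using T vn by blast
        then obtain m' where "(g^^m') v = i" using reach_agree[of i T g] iT by auto
        then have "(g^^Suc m') v = j" using iT by simp
        then show ?thesis by blast
      qed
      then show "g \<in> Gj n j" unfolding Gj_def using Fn_upd[OF T(1) iT(1) assms] iT by auto
    qed
  next
    show "Gj n j \<subseteq> \<phi> ` Sigma {..<n} (Arb n)"
    proof
      fix g assume g: "g \<in> Gj n j"
      have gF: "g \<in> Fn n" and gr: "\<forall>v<n. \<exists>m. (g^^m) v = j" using g by (auto simp: Gj_def)
      obtain m where "(g^^m) (g j) = j" using gr Fn_lt[OF gF assms] by blast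
      then have m: "g ((g^^m) j) = j" by (metis comp_apply funpow_Suc_right funpow.simps(2))
      define i where "i = (g^^m) j"
      have iv: "i < n" unfolding i_def using gF assms
        by (induction m) (auto simp: Fn_lt)
      have gi: "g i = j" using m i_def by simp
      have "\<exists>m. (g^^m) v = i" if vn: "v < n" for v
      proof -
        obtain m1 where "(g^^m1) v = j" using gr vn by blast
        then have "(g^^(m + m1)) v = i" unfolding i_def by (simp add: funpow_add)
        then show ?thesis by blast
      qed
      then have "g(i:=i) \<in> Arb n i" unfolding Arb_def
        using Fn_upd[OF gF iv iv] reach_agree[of i g "g(i:=i)"] by auto
      moreover have "g = \<phi> (i, g(i:=i))" using gi by (auto simp: \<phi>_def)
      ultimately show "g \<in> \<phi> ` Sigma {..<n} (Arb n)" using iv by blast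
    qed
  qed
  finally show ?thesis .
qed


lemma tw_balance:
  assumes "stochastic_matrix n P" "j < n"
  shows "(\<Sum>i<n. tw n P i * P i j) = tw n P j"
  using lhs_eq[OF assms(2)] rhs_eq[OF assms(2), of P] assms(1,2)
  by (simp add: stochastic_matrix_def)

lemma wt_nonneg:
  assumes "stochastic_matrix n P" "T \<in> Fn n"
  shows "wt n P r T \<ge> 0"
  unfolding wt_def using assms Fn_lt[OF assms(2)]
  by (intro prod_nonneg) (auto simp: stochastic_matrix_def)

lemma tw_nonneg:
  assumes "stochastic_matrix n P"
  shows "tw n P r \<ge> 0"
  unfolding tw_def using wt_nonneg[OF assms] by (intro sum_nonneg) (auto simp: Arb_def)

lemma tw_le1:
  assumes st: "stochastic_matrix n P" and r: "r < n"
  shows "tw n P r \<le> 1"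
proof -
  define A where "A = {..<n} - {r}"
  define \<rho> where "\<rho> = (\<lambda>T::nat\<Rightarrow>nat. restrict T A)"
  have inj: "inj_on \<rho> (Arb n r)"
  proof (rule inj_onI)
    fix T1 T2 assume T1: "T1 \<in> Arb n r" and T2: "T2 \<in> Arb n r" and e: "\<rho> T1 = \<rho> T2"
    show "T1 = T2"
    proof
      fix v
      show "T1 v = T2 v"
      proof (cases "v \<in> A")
        case True then show ?thesis using fun_cong[OF e, of v] by (simp add: \<rho>_def)
      next
        case False
        then have "v = r \<or> v \<notin> {..<n}" by (auto simp: A_def)
        then show ?thesis using T1 T2 by (auto simp: Arb_def Fn_def PiE_iff extensional_def)
      qed
    qed
  qed
  have img: "\<rho> ` Arb n r \<subseteq> PiE A (\<lambda>_. {..<n})"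
    using r by (auto simp: \<rho>_def Arb_def Fn_def A_def PiE_iff split: if_splits)
  have "tw n P r = (\<Sum>T\<in>Arb n r. \<Prod>v\<in>A. P v (\<rho> T v))"
    unfolding tw_def wt_def A_def \<rho>_def by (intro sum.cong prod.cong) auto
  also have "\<dots> = (\<Sum>h\<in>\<rho> ` Arb n r. \<Prod>v\<in>A. P v (h v))"
    by (rule sum.reindex[OF inj, unfolded comp_def, symmetric])
  also have "\<dots> \<le> (\<Sum>h\<in>PiE A (\<lambda>_. {..<n}). \<Prod>v\<in>A. P v (h v))"
  proof (rule sum_mono2[OF _ img])
    show "finite (PiE A (\<lambda>_. {..<n}))" by (simp add: A_def finite_PiE)
    fix h assume "h \<in> PiE A (\<lambda>_. {..<n}) - \<rho> ` Arb n r"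
    then show "0 \<le> (\<Prod>v\<in>A. P v (h v))" using st
      by (intro prod_nonneg) (auto simp: stochastic_matrix_def A_def PiE_iff)
  qed
  also have "\<dots> = (\<Prod>v\<in>A. \<Sum>u<n. P v u)"
    by (rule prod_sum_PiE[symmetric]) (auto simp: A_def)
  also have "\<dots> = 1" using st by (intro prod.neutral) (auto simp: stochastic_matrix_def A_def)
  finally show ?thesis .
qed

lemma tg_iff: "(a,b) \<in> trans_graph n P \<longleftrightarrow> a < n \<and> b < n \<and> P a b > 0"
  by (simp add: trans_graph_def)

lemma tree_exists:
  assumes irr: "irreducible_chain n P" and r: "r < n"
  shows "\<exists>T\<in>Arb n r. \<forall>v<n. v \<noteq> r \<longrightarrow> P v (T v) > 0"
proof -
  define E where "E = trans_graph n P"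
  have ex: "\<exists>m. (v,r) \<in> E^^m" if "v < n" for v
    using irr that r unfolding irreducible_chain_def E_def by (metis trancl_power)
  define d where "d v = (LEAST m. (v,r) \<in> E^^m)" for v
  have dE: "(v,r) \<in> E^^(d v)" if "v < n" for v
    unfolding d_def using ex[OF that] by (rule LeastI_ex)
  have dle: "d v \<le> m" if "(v,r) \<in> E^^m" for v m
    unfolding d_def using that by (rule Least_le)
  define nxt where "nxt v = (SOME u. (v,u) \<in> E \<and> (u,r) \<in> E^^(d v - 1))" for v
  have nxt: "(v, nxt v) \<in> E \<and> (nxt v, r) \<in> E^^(d v - 1)" if "v < n" "v \<noteq> r" for v
  proof -
    have "d v \<noteq> 0" using dE[OF that(1)] that(2) by (metis relpow_0_E)
    then obtain q where q: "d v = Suc q" by (cases "d v") auto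
    then have "\<exists>u. (v,u) \<in> E \<and> (u,r) \<in> E^^(d v - 1)"
      using dE[OF that(1)] by (simp add: relpow_Suc_D2)
    then show ?thesis unfolding nxt_def by (rule someI_ex)
  qed
  define T where "T v = (if v < n then (if v = r then r else nxt v) else undefined)" for v
  have Tn: "T v < n \<and> P v (T v) > 0" if "v < n" "v \<noteq> r" for v
    using nxt[OF that] that by (auto simp: T_def E_def tg_iff)
  have Td: "d (T v) < d v" if "v < n" "v \<noteq> r" for v
  proof -
    have "d (T v) \<le> d v - 1" using nxt[OF that] that by (intro dle) (simp add: T_def)
    moreover have "d v \<noteq> 0" using dE[OF that(1)] that(2) by (metis relpow_0_E)
    ultimately show ?thesis by linarith
  qed
  have reach: "v < n \<Longrightarrow> \<exists>m. (T^^m) v = r" for v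
  proof (induction "d v" arbitrary: v rule: less_induct)
    case less
    show ?case
    proof (cases "v = r")
      case True then show ?thesis by (intro exI[of _ 0]) simp
    next
      case False
      obtain m where "(T^^m) (T v) = r" using less.hyps[OF Td[OF less.prems False]] Tn[OF less.prems False] by blast
      then have "(T^^Suc m) v = r" by (simp add: funpow_Suc_right del: funpow.simps)
      then show ?thesis by blast
    qed
  qed
  have "T \<in> Fn n" unfolding Fn_def using Tn r by (auto simp: PiE_iff T_def extensional_def)
  moreover have "T r = r" using r by (simp add: T_def)
  ultimately have "T \<in> Arb n r" using reach by (simp add: Arb_def)
  then show ?thesis using Tn by blast
qed

lemma tw_pos:
  assumes st: "stochastic_matrix n P" and irr: "irreducible_chain n P" and r: "r < n"
  shows "tw n P r > 0"
proof -
  obtain T where T: "T \<in> Arb n r" "\<forall>v<n. v \<noteq> r \<longrightarrow> P v (T v) > 0"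
    using tree_exists[OF irr r] by blast
  have "wt n P r T > 0" unfolding wt_def using T(2) by (intro prod_pos) auto
  also have "wt n P r T \<le> tw n P r" unfolding tw_def
    using T(1) wt_nonneg[OF st] finite_Arb[of n r] by (intro member_le_sum) (auto simp: Arb_def)
  finally show ?thesis .
qed

lemma zero_spread:
  assumes st: "stochastic_matrix n P" and irr: "irreducible_chain n P"
    and nn: "\<forall>i<n. x i \<ge> 0" and inv: "\<forall>j<n. (\<Sum>i<n. x i * P i j) = x j"
    and j0: "j0 < n" "x j0 = 0"
  shows "\<forall>i<n. x i = 0"
proof -
  have step: "x a = 0" if "(a,b) \<in> trans_graph n P" "x b = 0" for a b
  proof -
    have ab: "a < n" "b < n" "P a b > 0" using that(1) by (auto simp: tg_iff)
    have "(\<Sum>i<n. x i * P i b) = 0" using inv ab that(2) by simp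
    moreover have "\<forall>i\<in>{..<n}. x i * P i b \<ge> 0" using nn st ab by (auto simp: stochastic_matrix_def)
    ultimately have "\<forall>i\<in>{..<n}. x i * P i b = 0"
      using sum_nonneg_eq_0_iff[of "{..<n}" "\<lambda>i. x i * P i b"] by auto
    then have "x a * P a b = 0" using ab by blast
    then show ?thesis using ab by simp
  qed
  show ?thesis
  proof (intro allI impI)
    fix i assume "i < n"
    then have "(i, j0) \<in> (trans_graph n P)\<^sup>+" using irr j0 by (simp add: irreducible_chain_def)
    then show "x i = 0"
      by (induction rule: converse_trancl_induct) (use step j0 in blast)+
  qed
qed


lemma pi_eq:
  assumes st: "stochastic_matrix n P" and irr: "irreducible_chain n P"
    and inv: "invariant_distribution n P \<pi>"
  shows "(\<Sum>l<n. tw n P l) > 0 \<and> (\<forall>i<n. \<pi> i = tw n P i / (\<Sum>l<n. tw n P l))"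
proof -
  have pnn: "\<forall>i<n. \<pi> i \<ge> 0" and ps: "(\<Sum>i<n. \<pi> i) = 1"
    and pinv: "\<forall>j<n. (\<Sum>i<n. \<pi> i * P i j) = \<pi> j"
    using inv by (auto simp: invariant_distribution_def)
  have n: "n > 0" using ps by (cases n) auto
  have ppos: "\<pi> i > 0" if "i < n" for i
  proof (rule ccontr)
    assume "\<not> \<pi> i > 0"
    then have "\<pi> i = 0" using pnn that by force
    then have "\<forall>i<n. \<pi> i = 0" using zero_spread[OF st irr pnn pinv that] by blast
    then have "(\<Sum>i<n. \<pi> i) = 0" by simp
    then show False using ps by simp
  qed
  define R where "R = (\<lambda>i. tw n P i / \<pi> i) ` {..<n}"
  define c where "c = Max R"
  have fR: "finite R" "R \<noteq> {}" using n by (auto simp: R_def)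
  obtain j where j: "j < n" "c = tw n P j / \<pi> j" using Max_in[OF fR] unfolding c_def R_def by auto
  have cge: "tw n P i \<le> c * \<pi> i" if "i < n" for i
  proof -
    have "tw n P i / \<pi> i \<le> c" unfolding c_def using fR that by (intro Max_ge) (auto simp: R_def)
    then show ?thesis using ppos[OF that] by (simp add: pos_divide_le_eq)
  qed
  define z where "z i = c * \<pi> i - tw n P i" for i
  have znn: "\<forall>i<n. z i \<ge> 0" using cge by (auto simp: z_def)
  have zinv: "\<forall>j<n. (\<Sum>i<n. z i * P i j) = z j"
  proof (intro allI impI)
    fix j assume jn: "j < n"
    have "(\<Sum>i<n. z i * P i j) = c * (\<Sum>i<n. \<pi> i * P i j) - (\<Sum>i<n. tw n P i * P i j)"
      by (simp add: z_def left_diff_distrib sum_subtractf sum_distrib_left mult.assoc)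
    also have "\<dots> = z j" using pinv jn tw_balance[OF st jn] by (simp add: z_def)
    finally show "(\<Sum>i<n. z i * P i j) = z j" .
  qed
  have zj: "z j = 0" using j ppos[OF j(1)] by (simp add: z_def)
  have z0: "\<forall>i<n. z i = 0" using zero_spread[OF st irr znn zinv j(1) zj] .
  have twc: "tw n P i = c * \<pi> i" if "i < n" for i using z0 that by (simp add: z_def)
  have W: "(\<Sum>l<n. tw n P l) = c" using twc ps by (simp add: sum_distrib_left[symmetric])
  have "tw n P 0 > 0" using tw_pos[OF st irr n] .
  also have "tw n P 0 \<le> (\<Sum>l<n. tw n P l)" using n tw_nonneg[OF st]
    by (intro member_le_sum) auto
  finally have Wp: "(\<Sum>l<n. tw n P l) > 0" .
  show ?thesis using Wp W twc by auto
qed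

lemma lcd_bound:
  assumes st: "stochastic_matrix n P" and irr: "irreducible_chain n P"
    and inv: "invariant_distribution n P \<pi>"
    and K: "K > 0" "\<forall>i<n. K * tw n P i \<in> \<int>"
  shows "(\<forall>i<n. \<pi> i \<in> \<rat>) \<and> real (lcd n \<pi>) \<le> real n * K"
proof -
  define W where "W = (\<Sum>l<n. tw n P l)"
  have Wp: "W > 0" and pe: "\<forall>i<n. \<pi> i = tw n P i / W" using pi_eq[OF st irr inv] by (auto simp: W_def)
  define A where "A = K * W"
  have AZ: "A \<in> \<int>" unfolding A_def W_def sum_distrib_left using K(2) by (intro Ints_sum) auto
  have Ap: "A > 0" using K Wp by (simp add: A_def)
  obtain N where N: "A = of_int N" using AZ by (auto elim: Ints_cases)
  define d where "d = nat N"
  have dA: "real d = A" using N Ap by (simp add: d_def)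
  have dpi: "real d * \<pi> i = K * tw n P i" if "i < n" for i
    using pe that Wp by (simp add: dA A_def)
  have "lcd n \<pi> \<le> d" unfolding lcd_def
    using dpi K(2) dA Ap by (intro Least_le) auto
  then have "real (lcd n \<pi>) \<le> A" using dA by linarith
  also have "A \<le> (\<Sum>l<n. K)" unfolding A_def W_def sum_distrib_left
    using tw_le1[OF st] K by (intro sum_mono) (simp add: mult_le_cancel_left1)
  also have "\<dots> = real n * K" by simp
  finally have b: "real (lcd n \<pi>) \<le> real n * K" .
  have "\<pi> i \<in> \<rat>" if "i < n" for i
  proof -
    have "\<pi> i = (K * tw n P i) / A" using pe that K Wp by (simp add: A_def)
    then show ?thesis using K(2) that AZ Ints_subset_Rats by (metis Rats_divide subsetD)
  qed
  then show ?thesis using b by blast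
qed


lemma K1_int:
  assumes MP: "\<forall>i<n. \<forall>j<n. real M * P i j \<in> \<int>" and i: "i < n"
  shows "real M ^ (n - 1) * tw n P i \<in> \<int>"
proof -
  have c: "card ({..<n} - {i}) = n - 1" using i by simp
  have "real M ^ (n - 1) * tw n P i = (\<Sum>T\<in>Arb n i. \<Prod>v\<in>{..<n}-{i}. real M * P v (T v))"
    unfolding tw_def wt_def sum_distrib_left prod.distrib using c by simp
  also have "\<dots> \<in> \<int>" using MP
    by (intro Ints_sum Ints_prod) (auto simp: Arb_def Fn_lt)
  finally show ?thesis .
qed

lemma nonbranch_int:
  assumes st: "stochastic_matrix n P" and v: "v < n" "u < n"
    and nb: "\<not> 2 \<le> card {j. j < n \<and> P v j > 0}"
  shows "P v u \<in> \<int>"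
proof (cases "P v u > 0")
  case False
  then have "P v u = 0" using st v by (force simp: stochastic_matrix_def)
  then show ?thesis by simp
next
  case True
  define S where "S = {j. j < n \<and> P v j > 0}"
  have fS: "finite S" by (simp add: S_def)
  have uS: "u \<in> S" using True v by (simp add: S_def)
  have "card S \<le> Suc 0" using nb by (simp add: S_def)
  then have "S = {u}" using uS fS card_le_Suc0_iff_eq by blast
  have "1 = (\<Sum>j<n. P v j)" using st v by (simp add: stochastic_matrix_def)
  also have "\<dots> = (\<Sum>j\<in>S. P v j)"
    using st v by (intro sum.mono_neutral_right) (force simp: stochastic_matrix_def S_def)+
  also have "\<dots> = P v u" using \<open>S = {u}\<close> by simp
  finally show ?thesis by (metis Ints_1)
qed

lemma K2_int:
  assumes st: "stochastic_matrix n P" and MP: "\<forall>i<n. \<forall>j<n. real M * P i j \<in> \<int>" and i: "i < n"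
  shows "real M ^ branching_states n P * tw n P i \<in> \<int>"
proof -
  define D where "D v = (if 2 \<le> card {j. j < n \<and> P v j > 0} then real M else 1)" for v
  have DP: "D v * P v u \<in> \<int>" if "v < n" "u < n" for v u
    using MP that nonbranch_int[OF st that] by (auto simp: D_def)
  have "(\<Prod>v<n. D v) = (\<Prod>v\<in>{v\<in>{..<n}. 2 \<le> card {j. j < n \<and> P v j > 0}}. real M)"
    unfolding D_def by (rule prod.inter_filter[symmetric]) simp
  also have "{v\<in>{..<n}. 2 \<le> card {j. j < n \<and> P v j > 0}} = {i. i < n \<and> card {j. j < n \<and> P i j > 0} \<ge> 2}"
    by auto
  finally have pD: "(\<Prod>v<n. D v) = real M ^ branching_states n P"
    by (simp add: branching_states_def)
  have pD2: "(\<Prod>v<n. D v) = D i * (\<Prod>v\<in>{..<n}-{i}. D v)" using i by (simp add: prod.remove)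
  have eq: "real M ^ branching_states n P * tw n P i
      = (\<Sum>T\<in>Arb n i. D i * (\<Prod>v\<in>{..<n}-{i}. D v * P v (T v)))"
    unfolding tw_def wt_def sum_distrib_left prod.distrib pD[symmetric] pD2 by (simp add: mult.assoc)
  have Di: "D i \<in> \<int>" by (simp add: D_def)
  have "(\<Sum>T\<in>Arb n i. D i * (\<Prod>v\<in>{..<n}-{i}. D v * P v (T v))) \<in> \<int>" using DP
    by (intro Ints_sum Ints_mult[OF Di] Ints_prod) (auto simp: Arb_def Fn_lt)
  then show ?thesis using eq by simp
qed

theorem mainTheorem8:
  fixes n M :: nat and P :: "nat \<Rightarrow> nat \<Rightarrow> real" and \<pi> :: "nat \<Rightarrow> real"
  assumes "M > 0"
    and "stochastic_matrix n P"
    and "\<forall>i<n. \<forall>j<n. real M * P i j \<in> \<int>"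
    and "irreducible_chain n P"
    and "invariant_distribution n P \<pi>"
  shows "(\<forall>i<n. \<pi> i \<in> \<rat>) \<and>
         real (lcd n \<pi>) \<le> real n * real M ^ min (branching_states n P) (n - 1)"
proof -
  have b1: "(\<forall>i<n. \<pi> i \<in> \<rat>) \<and> real (lcd n \<pi>) \<le> real n * real M ^ (n - 1)"
    using assms K1_int[OF assms(3)] by (intro lcd_bound) auto
  have b2: "real (lcd n \<pi>) \<le> real n * real M ^ branching_states n P"
    using assms K2_int[OF assms(2,3)] lcd_bound[of n P \<pi> "real M ^ branching_states n P"] by auto
  show ?thesis
  proof (cases "branching_states n P \<le> n - 1")
    case True then show ?thesis using b1 b2 by (simp add: min_def)
  next
    case False then show ?thesis using b1 by (simp add: min_def)
  qed
qed

end
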